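(* Let $p \in (0,\frac{1}{2})$ be a constant. No (possibly randomized) sorting algorithm can achieve, on a random instance with $n$ elements, an expected total dislocation of $o(n)$.
   Context: Setting: the elements are $S=\{1,\dots,n\}$ with the natural order. A random instance consists of an input permutation of $S$ chosen uniformly at random together with comparison outcomes: for each pair $i<j$ independently, the comparison reports the wrong order with probability exactly $p$ and the correct order otherwise; outcomes are persistent (repeated comparisons of the same pair return the same outcome). The algorithm accesses elements only via these comparisons and outputs a permutation of $S$. The dislocation of an element is the absolute difference between its position in the output and its true rank; the total dislocation is the sum over all elements. *)

theory Defs
  imports "HOL-Probability.Probability" "HOL-Combinatorics.Permutations" "HOL-Library.Landau_Symbols"
begin

text \<open>Elements are identified with their true ranks 0..n-1 (the shift from 1..n is
irrelevant for dislocations). Positions in the input are 0..n-1.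
An input permutation \<sigma> maps input position a to the element stored there.
A set F of pairs (i,j), i<j<n, of elements lists the comparisons that report the wrong order.\<close>

definition pairs :: "nat \<Rightarrow> (nat \<times> nat) set" where
  "pairs n = {(i, j). i < j \<and> j < n}"

text \<open>Observed (persistent) comparison outcomes, indexed by input positions:
obs n \<sigma> F a b holds iff the comparison reports the element at position a as smaller
than the element at position b.\<close>
definition obs :: "nat \<Rightarrow> (nat \<Rightarrow> nat) \<Rightarrow> (nat \<times> nat) set \<Rightarrow> nat \<Rightarrow> nat \<Rightarrow> bool" where
  "obs n \<sigma> F a b \<longleftrightarrow> a < n \<and> b < n \<and> a \<noteq> b \<and>
     ((\<sigma> a < \<sigma> b) \<noteq> ((min (\<sigma> a) (\<sigma> b), max (\<sigma> a) (\<sigma> b)) \<in> F))"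

definition err_prob :: "real \<Rightarrow> nat \<Rightarrow> (nat \<times> nat) set \<Rightarrow> real" where
  "err_prob p n F = p ^ card F * (1 - p) ^ (card (pairs n) - card F)"

text \<open>Total dislocation: the output \<pi> maps input position a to its output position;
the element at a is \<sigma> a, whose true rank is \<sigma> a.\<close>
definition total_disl :: "nat \<Rightarrow> (nat \<Rightarrow> nat) \<Rightarrow> (nat \<Rightarrow> nat) \<Rightarrow> real" where
  "total_disl n \<sigma> \<pi> = (\<Sum>a<n. \<bar>real (\<pi> a) - real (\<sigma> a)\<bar>)"

text \<open>A (randomized) algorithm A: for each n, given the comparison outcomes on input
positions, a distribution of output permutations of positions.\<close>
definition exp_disl :: "real \<Rightarrow> (nat \<Rightarrow> (nat \<Rightarrow> nat \<Rightarrow> bool) \<Rightarrow> (nat \<Rightarrow> nat) pmf) \<Rightarrow> nat \<Rightarrow> real" where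
  "exp_disl p A n =
     (\<Sum>\<sigma>\<in>{\<sigma>. \<sigma> permutes {..<n}}. \<Sum>F\<in>Pow (pairs n).
        (1 / fact n) * err_prob p n F *
        measure_pmf.expectation (A n (obs n \<sigma> F)) (total_disl n \<sigma>))"

definition valid_alg :: "(nat \<Rightarrow> (nat \<Rightarrow> nat \<Rightarrow> bool) \<Rightarrow> (nat \<Rightarrow> nat) pmf) \<Rightarrow> bool" where
  "valid_alg A \<longleftrightarrow> (\<forall>n c. set_pmf (A n c) \<subseteq> {\<pi>. \<pi> permutes {..<n}})"

end

theory Submission
  imports Defs
begin

lemma err_sum:
  fixes p :: real
  assumes "finite X"
  shows "(\<Sum>F\<in>Pow X. p ^ card F * (1 - p) ^ (card X - card F)) = 1"
  using assms
proof (induction X rule: finite_induct)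
  case empty
  then show ?case by simp
next
  case (insert x X)
  have fin: "finite (Pow X)" using insert by simp
  have P: "Pow (insert x X) = Pow X \<union> insert x ` Pow X" by (rule Pow_insert)
  have disj: "Pow X \<inter> insert x ` Pow X = {}" using insert by auto
  have inj: "inj_on (insert x) (Pow X)" using insert unfolding inj_on_def by (metis Diff_insert_absorb PowD in_mono)
  have c: "card (insert x X) = Suc (card X)" using insert by simp
  have s1: "(\<Sum>F\<in>Pow X. p ^ card F * (1 - p) ^ (card (insert x X) - card F))
      = (1 - p) * (\<Sum>F\<in>Pow X. p ^ card F * (1 - p) ^ (card X - card F))"
    unfolding sum_distrib_left
  proof (rule sum.cong)
    fix F assume "F \<in> Pow X"
    then have "card F \<le> card X" using insert by (simp add: card_mono)
    then have "card (insert x X) - card F = Suc (card X - card F)" using c by simp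
    then show "p ^ card F * (1 - p) ^ (card (insert x X) - card F) = (1 - p) * (p ^ card F * (1 - p) ^ (card X - card F))"
      by simp
  qed simp
  have s2: "(\<Sum>F\<in>insert x ` Pow X. p ^ card F * (1 - p) ^ (card (insert x X) - card F))
      = p * (\<Sum>F\<in>Pow X. p ^ card F * (1 - p) ^ (card X - card F))"
    unfolding sum_distrib_left sum.reindex[OF inj] o_def
  proof (rule sum.cong)
    fix F assume F: "F \<in> Pow X"
    then have "finite F" "x \<notin> F" using insert finite_subset by auto
    then have "card (insert x F) = Suc (card F)" by simp
    then show "p ^ card (insert x F) * (1 - p) ^ (card (insert x X) - card (insert x F)) = p * (p ^ card F * (1 - p) ^ (card X - card F))"
      using c by simp
  qed simp
  show ?case
    unfolding P sum.union_disjoint[OF fin finite_imageI[OF fin] disj] s1 s2 insert.IH by simp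
qed

definition PS :: "nat \<Rightarrow> (nat \<Rightarrow> nat) set" where "PS n = {\<pi>. \<pi> permutes {..<n}}"

lemma finite_PS: "finite (PS n)" unfolding PS_def by (simp add: finite_permutations)

lemma finite_pairs: "finite (pairs n)"
  by (rule finite_subset[of _ "{..<n} \<times> {..<n}"]) (auto simp: pairs_def)

lemma exp_as_sum:
  assumes "valid_alg A"
  shows "measure_pmf.expectation (A n c) (f :: _ \<Rightarrow> real) = (\<Sum>\<pi>\<in>PS n. pmf (A n c) \<pi> * f \<pi>)"
proof -
  have "set_pmf (A n c) \<subseteq> PS n" using assms unfolding valid_alg_def PS_def by blast
  then show ?thesis by (subst integral_measure_pmf[OF finite_PS]) auto
qed

lemma sum_pmf_PS:
  assumes "valid_alg A"
  shows "(\<Sum>\<pi>\<in>PS n. pmf (A n c) \<pi>) = 1"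
  using assms unfolding valid_alg_def PS_def
  by (intro sum_pmf_eq_1) (auto simp: finite_permutations)

definition gg :: "nat \<Rightarrow> (nat \<Rightarrow> nat) \<Rightarrow> (nat \<Rightarrow> nat) \<Rightarrow> nat \<Rightarrow> real" where
  "gg n \<sigma> \<pi> u = (\<Sum>a<n. if \<sigma> a = u then \<bar>real (\<pi> a) - real (\<sigma> a)\<bar> else 0)"

lemma gg_nonneg: "gg n \<sigma> \<pi> u \<ge> 0" unfolding gg_def by (intro sum_nonneg) auto

lemma total_gg:
  assumes "\<sigma> permutes {..<n}"
  shows "total_disl n \<sigma> \<pi> = (\<Sum>u<n. gg n \<sigma> \<pi> u)"
proof -
  have "(\<Sum>u<n. gg n \<sigma> \<pi> u) = (\<Sum>a<n. \<Sum>u<n. if \<sigma> a = u then \<bar>real (\<pi> a) - real (\<sigma> a)\<bar> else 0)"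
    unfolding gg_def by (rule sum.swap)
  also have "\<dots> = (\<Sum>a<n. \<bar>real (\<pi> a) - real (\<sigma> a)\<bar>)"
  proof (rule sum.cong)
    fix a assume "a \<in> {..<n}"
    then have "\<sigma> a \<in> {..<n}" using permutes_in_image[OF assms] by simp
    then show "(\<Sum>u<n. if \<sigma> a = u then \<bar>real (\<pi> a) - real (\<sigma> a)\<bar> else 0) = \<bar>real (\<pi> a) - real (\<sigma> a)\<bar>"
      by (simp add: sum.delta)
  qed simp
  finally show ?thesis unfolding total_disl_def by simp
qed

definition tau :: "nat \<Rightarrow> nat \<Rightarrow> nat" where "tau v = Transposition.transpose v (Suc v)"
definition rr :: "nat \<Rightarrow> nat \<times> nat \<Rightarrow> nat \<times> nat" where
  "rr v m = (min (tau v (fst m)) (tau v (snd m)), max (tau v (fst m)) (tau v (snd m)))"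
definition TT :: "nat \<Rightarrow> (nat \<times> nat) set \<Rightarrow> (nat \<times> nat) set" where
  "TT v F = rr v ` (F - {(v, Suc v)})"
definition UU :: "nat \<Rightarrow> (nat \<times> nat) set \<Rightarrow> (nat \<times> nat) set" where
  "UU v F = insert (v, Suc v) (rr v ` F)"

lemma tau_less: "x \<noteq> y \<Longrightarrow> (min x y, max x y) \<noteq> (v, Suc v) \<Longrightarrow> (tau v x < tau v y) = (x < y)"
  unfolding tau_def Transposition.transpose_def by (auto simp: min_def max_def)

lemma tau_flip: "x \<noteq> y \<Longrightarrow> (min x y, max x y) = (v, Suc v) \<Longrightarrow> (tau v x < tau v y) = (\<not> x < y)"
  unfolding tau_def Transposition.transpose_def by (auto simp: min_def max_def split: if_splits)

lemma rr_sym: "rr v (min x y, max x y) = (min (tau v x) (tau v y), max (tau v x) (tau v y))"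
  unfolding rr_def by (cases "x \<le> y") (auto simp: min_def max_def)

lemma tau_lt: "Suc v < n \<Longrightarrow> x < n \<Longrightarrow> tau v x < n"
  unfolding tau_def Transposition.transpose_def by auto

lemma tau_inj: "tau v x = tau v y \<longleftrightarrow> x = y"
  unfolding tau_def Transposition.transpose_def by auto

lemma tau_tau: "tau v (tau v x) = x"
  unfolding tau_def Transposition.transpose_def by auto

lemma rr_pairs: "Suc v < n \<Longrightarrow> m \<in> pairs n \<Longrightarrow> rr v m \<in> pairs n"
proof -
  assume a: "Suc v < n" "m \<in> pairs n"
  obtain x y where m: "m = (x, y)" "x < y" "y < n" using a(2) unfolding pairs_def by auto
  have "tau v x < n" "tau v y < n" "tau v x \<noteq> tau v y"
    using tau_lt[OF a(1)] tau_inj[of v x y] m by auto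
  then show ?thesis unfolding pairs_def rr_def m by (auto simp: min_def max_def)
qed

lemma rr_inv: "fst m < snd m \<Longrightarrow> rr v (rr v m) = m"
  unfolding rr_def using tau_tau[of v] tau_inj[of v]
  by (cases m) (auto simp: min_def max_def)

lemma rr_inj: "inj_on (rr v) {m. fst m < snd m}"
  by (rule inj_onI) (metis mem_Collect_eq rr_inv)

lemma rr_e: "rr v (v, Suc v) = (v, Suc v)"
  unfolding rr_def tau_def Transposition.transpose_def by simp

lemma pairs_ord: "m \<in> pairs n \<Longrightarrow> fst m < snd m"
  unfolding pairs_def by auto

lemma rr_mem_iff:
  assumes "F \<subseteq> pairs n" "fst m < snd m"
  shows "rr v m \<in> rr v ` F \<longleftrightarrow> m \<in> F"
proof -
  have "F \<subseteq> {m. fst m < snd m}" using assms pairs_ord by blast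
  then show ?thesis using inj_on_image_mem_iff[OF rr_inj] assms by blast
qed

lemma obs_swap:
  assumes sp: "\<sigma> permutes {..<n}" and F: "F \<subseteq> pairs n" and e: "(v, Suc v) \<in> F"
  shows "obs n (tau v \<circ> \<sigma>) (TT v F) = obs n \<sigma> F"
proof (intro ext)
  fix a b
  show "obs n (tau v \<circ> \<sigma>) (TT v F) a b = obs n \<sigma> F a b"
  proof (cases "a < n \<and> b < n \<and> a \<noteq> b")
    case False
    then show ?thesis unfolding obs_def by auto
  next
    case True
    define x where "x = \<sigma> a"
    define y where "y = \<sigma> b"
    have xy: "x \<noteq> y" unfolding x_def y_def using True permutes_inj[OF sp] by (metis injD)
    define m where "m = (min x y, max x y)"
    have mo: "fst m < snd m" unfolding m_def using xy by (auto simp: min_def max_def)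
    have F2: "F - {(v, Suc v)} \<subseteq> pairs n" using F by blast
    have key: "((min (tau v x) (tau v y), max (tau v x) (tau v y)) \<in> TT v F) \<longleftrightarrow> m \<in> F - {(v, Suc v)}"
      unfolding TT_def rr_sym[symmetric] m_def[symmetric] using rr_mem_iff[OF F2 mo] by blast
    show ?thesis
    proof (cases "m = (v, Suc v)")
      case True
      then show ?thesis using key tau_flip[OF xy] e \<open>a < n \<and> b < n \<and> a \<noteq> b\<close>
        unfolding obs_def x_def y_def m_def by auto
    next
      case False
      then show ?thesis using key tau_less[OF xy] \<open>a < n \<and> b < n \<and> a \<noteq> b\<close>
        unfolding obs_def x_def y_def m_def by auto
    qed
  qed
qed

lemma card_TT:
  assumes F: "F \<subseteq> pairs n" and e: "(v, Suc v) \<in> F"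
  shows "card (TT v F) = card F - 1"
proof -
  have "F - {(v, Suc v)} \<subseteq> {m. fst m < snd m}" using F pairs_ord by blast
  then have "inj_on (rr v) (F - {(v, Suc v)})" using inj_on_subset[OF rr_inj] by blast
  then have "card (TT v F) = card (F - {(v, Suc v)})" unfolding TT_def by (rule card_image)
  then show ?thesis using e by simp
qed

lemma err_swap:
  fixes p :: real
  assumes F: "F \<subseteq> pairs n" and e: "(v, Suc v) \<in> F"
  shows "p * err_prob p n (TT v F) = (1 - p) * err_prob p n F"
proof -
  have fin: "finite F" using F finite_pairs finite_subset by blast
  have c1: "card F \<ge> 1" using e fin by (metis One_nat_def Suc_leI card_gt_0_iff empty_iff)
  have c2: "card F \<le> card (pairs n)" using F finite_pairs by (simp add: card_mono)
  obtain k where k: "card F = Suc k" using c1 by (cases "card F") auto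
  have "card (pairs n) - k = Suc (card (pairs n) - card F)" using k c2 by simp
  then show ?thesis unfolding err_prob_def card_TT[OF F e] using k by simp
qed

lemma tau_permutes: "Suc v < n \<Longrightarrow> tau v permutes {..<n}"
  unfolding tau_def by (rule permutes_swap_id) auto

lemma e_pairs: "Suc v < n \<Longrightarrow> (v, Suc v) \<in> pairs n"
  unfolding pairs_def by auto

lemma TT_sub: "Suc v < n \<Longrightarrow> F \<subseteq> pairs n \<Longrightarrow> TT v F \<subseteq> pairs n"
  unfolding TT_def using rr_pairs by blast

lemma e_notin_rr:
  assumes "F \<subseteq> pairs n" "(v, Suc v) \<notin> F"
  shows "(v, Suc v) \<notin> rr v ` F"
proof
  assume "(v, Suc v) \<in> rr v ` F"
  then obtain m where m: "m \<in> F" "rr v m = (v, Suc v)" by (metis imageE)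
  then have "m = rr v (v, Suc v)" using rr_inv[of m v] pairs_ord assms by (metis subsetD)
  then show False using m assms rr_e by simp
qed

lemma rr_rr_image: "F \<subseteq> pairs n \<Longrightarrow> rr v ` rr v ` F = F"
proof -
  assume "F \<subseteq> pairs n"
  then have "\<And>m. m \<in> F \<Longrightarrow> rr v (rr v m) = m" using rr_inv pairs_ord by blast
  then show ?thesis unfolding image_image by simp
qed

lemma UU_TT: "F \<subseteq> pairs n \<Longrightarrow> (v, Suc v) \<in> F \<Longrightarrow> UU v (TT v F) = F"
proof -
  assume a: "F \<subseteq> pairs n" "(v, Suc v) \<in> F"
  have "rr v ` TT v F = F - {(v, Suc v)}" unfolding TT_def
    by (rule rr_rr_image[of _ n]) (use a in blast)
  then show ?thesis unfolding UU_def using a by auto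
qed

lemma TT_UU: "F \<subseteq> pairs n \<Longrightarrow> (v, Suc v) \<notin> F \<Longrightarrow> TT v (UU v F) = F"
proof -
  assume a: "F \<subseteq> pairs n" "(v, Suc v) \<notin> F"
  have "UU v F - {(v, Suc v)} = rr v ` F" unfolding UU_def using e_notin_rr[OF a] by auto
  then show ?thesis unfolding TT_def using rr_rr_image[OF a(1)] by simp
qed

lemma e_notin_TT: "F \<subseteq> pairs n \<Longrightarrow> (v, Suc v) \<notin> TT v F"
  unfolding TT_def using e_notin_rr[of "F - {(v, Suc v)}" n v] by blast

lemma UU_sub: "Suc v < n \<Longrightarrow> F \<subseteq> pairs n \<Longrightarrow> UU v F \<subseteq> pairs n"
  unfolding UU_def using rr_pairs e_pairs by blast

lemma tau_tau_comp: "tau v \<circ> (tau v \<circ> \<sigma>) = \<sigma>"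
  by (simp add: fun_eq_iff tau_tau)

lemma bij_Phi:
  assumes "Suc v < n"
  shows "bij_betw (\<lambda>x. (tau v \<circ> fst x, TT v (snd x)))
     {x \<in> PS n \<times> Pow (pairs n). (v, Suc v) \<in> snd x}
     (PS n \<times> Pow (pairs n) - {x \<in> PS n \<times> Pow (pairs n). (v, Suc v) \<in> snd x})"
proof (rule bij_betw_byWitness[where f' = "\<lambda>x. (tau v \<circ> fst x, UU v (snd x))"])
  show "\<forall>a\<in>{x \<in> PS n \<times> Pow (pairs n). (v, Suc v) \<in> snd x}.
      (tau v \<circ> fst (tau v \<circ> fst a, TT v (snd a)), UU v (snd (tau v \<circ> fst a, TT v (snd a)))) = a"
    using UU_TT by (auto simp: tau_tau_comp)
  show "\<forall>a\<in>PS n \<times> Pow (pairs n) - {x \<in> PS n \<times> Pow (pairs n). (v, Suc v) \<in> snd x}.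
      (tau v \<circ> fst (tau v \<circ> fst a, UU v (snd a)), TT v (snd (tau v \<circ> fst a, UU v (snd a)))) = a"
  proof
    fix a assume "a \<in> PS n \<times> Pow (pairs n) - {x \<in> PS n \<times> Pow (pairs n). (v, Suc v) \<in> snd x}"
    then obtain \<sigma> F where a: "a = (\<sigma>, F)" "F \<subseteq> pairs n" "(v, Suc v) \<notin> F" by auto
    show "(tau v \<circ> fst (tau v \<circ> fst a, UU v (snd a)), TT v (snd (tau v \<circ> fst a, UU v (snd a)))) = a"
      using TT_UU[OF a(2,3)] a(1) by (simp add: tau_tau_comp)
  qed
  show "(\<lambda>x. (tau v \<circ> fst x, TT v (snd x))) ` {x \<in> PS n \<times> Pow (pairs n). (v, Suc v) \<in> snd x}
    \<subseteq> PS n \<times> Pow (pairs n) - {x \<in> PS n \<times> Pow (pairs n). (v, Suc v) \<in> snd x}"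
    using TT_sub[OF assms] e_notin_TT permutes_compose[OF _ tau_permutes[OF assms]]
    by (auto simp: PS_def) (meson TT_sub[OF assms] subsetD)
  show "(\<lambda>x. (tau v \<circ> fst x, UU v (snd x))) ` (PS n \<times> Pow (pairs n) - {x \<in> PS n \<times> Pow (pairs n). (v, Suc v) \<in> snd x})
    \<subseteq> {x \<in> PS n \<times> Pow (pairs n). (v, Suc v) \<in> snd x}"
    using UU_sub[OF assms] permutes_compose[OF _ tau_permutes[OF assms]]
    by (auto simp: PS_def UU_def) (meson rr_pairs[OF assms] subsetD)
qed

definition GG :: "nat \<Rightarrow> nat \<Rightarrow> (nat \<Rightarrow> nat) \<Rightarrow> (nat \<Rightarrow> nat) \<Rightarrow> real" where
  "GG n v \<sigma> \<pi> = gg n \<sigma> \<pi> v + gg n \<sigma> \<pi> (Suc v)"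

lemma GG_nonneg: "GG n v \<sigma> \<pi> \<ge> 0" unfolding GG_def using gg_nonneg by (simp add: add_nonneg_nonneg)

lemma gg_ge:
  assumes "a0 < n" "\<sigma> a0 = u"
  shows "\<bar>real (\<pi> a0) - real u\<bar> \<le> gg n \<sigma> \<pi> u"
proof -
  have "(if \<sigma> a0 = u then \<bar>real (\<pi> a0) - real (\<sigma> a0)\<bar> else 0)
     \<le> (\<Sum>a<n. if \<sigma> a = u then \<bar>real (\<pi> a) - real (\<sigma> a)\<bar> else 0)"
    by (rule member_le_sum) (use assms in auto)
  then show ?thesis using assms unfolding gg_def by simp
qed

lemma GG_pair:
  assumes sp: "\<sigma> permutes {..<n}" and v: "Suc v < n"
  shows "1 \<le> GG n v \<sigma> \<pi> + GG n v (tau v \<circ> \<sigma>) \<pi>"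
proof -
  have "v \<in> \<sigma> ` {..<n}" using permutes_image[OF sp] v by auto
  then obtain a0 where a0: "a0 < n" "\<sigma> a0 = v" by auto
  have t: "(tau v \<circ> \<sigma>) a0 = Suc v" using a0 unfolding tau_def Transposition.transpose_def by simp
  have 1: "\<bar>real (\<pi> a0) - real v\<bar> \<le> gg n \<sigma> \<pi> v" by (rule gg_ge) (use a0 in auto)
  have 2: "\<bar>real (\<pi> a0) - real (Suc v)\<bar> \<le> gg n (tau v \<circ> \<sigma>) \<pi> (Suc v)" by (rule gg_ge) (use a0 t in auto)
  have 3: "1 \<le> \<bar>real (\<pi> a0) - real v\<bar> + \<bar>real (\<pi> a0) - real (Suc v)\<bar>" by simp
  show ?thesis using 1 2 3 gg_nonneg[of n \<sigma> \<pi> "Suc v"] gg_nonneg[of n "tau v \<circ> \<sigma>" \<pi> v]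
    unfolding GG_def by linarith
qed

definition Ex :: "real \<Rightarrow> (nat \<Rightarrow> (nat \<Rightarrow> nat \<Rightarrow> bool) \<Rightarrow> (nat \<Rightarrow> nat) pmf) \<Rightarrow> nat
     \<Rightarrow> ((nat \<Rightarrow> nat) \<Rightarrow> (nat \<Rightarrow> nat) \<Rightarrow> real) \<Rightarrow> real" where
  "Ex p A n h = (\<Sum>\<sigma>\<in>PS n. \<Sum>F\<in>Pow (pairs n). (1 / fact n * err_prob p n F) *
      (\<Sum>\<pi>\<in>PS n. pmf (A n (obs n \<sigma> F)) \<pi> * h \<sigma> \<pi>))"

lemma err_nonneg: "0 \<le> p \<Longrightarrow> p \<le> 1 \<Longrightarrow> 0 \<le> err_prob p n F"
  unfolding err_prob_def by simp

lemma Ex_add: "Ex p A n (\<lambda>\<sigma> \<pi>. h1 \<sigma> \<pi> + h2 \<sigma> \<pi>) = Ex p A n h1 + Ex p A n h2"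
  unfolding Ex_def by (simp add: distrib_left sum.distrib)

lemma Ex_zero: "Ex p A n (\<lambda>\<sigma> \<pi>. 0) = 0"
  unfolding Ex_def by simp

lemma Ex_cmult: "Ex p A n (\<lambda>\<sigma> \<pi>. c * h \<sigma> \<pi>) = c * Ex p A n h"
  unfolding Ex_def by (simp add: sum_distrib_left mult.left_commute)

lemma Ex_sum: "finite V \<Longrightarrow> Ex p A n (\<lambda>\<sigma> \<pi>. \<Sum>v\<in>V. h v \<sigma> \<pi>) = (\<Sum>v\<in>V. Ex p A n (h v))"
proof (induction V rule: finite_induct)
  case empty
  then show ?case using Ex_zero by simp
next
  case (insert x V)
  then show ?case using Ex_add[of p A n "h x" "\<lambda>\<sigma> \<pi>. \<Sum>v\<in>V. h v \<sigma> \<pi>"] by simp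
qed

lemma Ex_mono:
  assumes "0 \<le> p" "p \<le> 1" "\<And>\<sigma> \<pi>. h1 \<sigma> \<pi> \<le> h2 \<sigma> \<pi>"
  shows "Ex p A n h1 \<le> Ex p A n h2"
  unfolding Ex_def
  by (intro sum_mono mult_left_mono) (auto simp: assms err_nonneg)

lemma exp_disl_Ex:
  assumes "valid_alg A"
  shows "exp_disl p A n = Ex p A n (\<lambda>\<sigma> \<pi>. \<Sum>u<n. gg n \<sigma> \<pi> u)"
  unfolding exp_disl_def Ex_def PS_def[symmetric]
proof (rule sum.cong[OF refl], rule sum.cong[OF refl])
  fix \<sigma> F assume "\<sigma> \<in> PS n"
  then have sp: "\<sigma> permutes {..<n}" unfolding PS_def by simp
  show "1 / fact n * err_prob p n F * measure_pmf.expectation (A n (obs n \<sigma> F)) (total_disl n \<sigma>) =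
         1 / fact n * err_prob p n F * (\<Sum>\<pi>\<in>PS n. pmf (A n (obs n \<sigma> F)) \<pi> * (\<Sum>u<n. gg n \<sigma> \<pi> u))"
    unfolding exp_as_sum[OF assms] total_gg[OF sp] ..
qed

lemma key:
  assumes vA: "valid_alg A" and p0: "0 < p" and p1: "p \<le> 1/2" and v: "Suc v < n"
  shows "p \<le> Ex p A n (GG n v)"
proof -
  define W where "W F = 1 / fact n * err_prob p n F" for F
  define H where "H \<sigma> F = (\<Sum>\<pi>\<in>PS n. pmf (A n (obs n \<sigma> F)) \<pi> * GG n v \<sigma> \<pi>)" for \<sigma> F
  define U where "U = PS n \<times> Pow (pairs n)"
  define U1 where "U1 = {x \<in> PS n \<times> Pow (pairs n). (v, Suc v) \<in> snd x}"
  define \<Phi> where "\<Phi> x = (tau v \<circ> fst x, TT v (snd x))" for x :: "(nat \<Rightarrow> nat) \<times> (nat \<times> nat) set"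
  define hx where "hx x = W (snd x) * H (fst x) (snd x)" for x
  define wx where "wx x = W (snd x)" for x :: "(nat \<Rightarrow> nat) \<times> (nat \<times> nat) set"
  have finU: "finite U" unfolding U_def using finite_PS finite_pairs by simp
  have sub: "U1 \<subseteq> U" unfolding U1_def U_def by auto
  have bij: "bij_betw \<Phi> U1 (U - U1)" using bij_Phi[OF v] unfolding \<Phi>_def U_def U1_def .
  have split: "sum f U = (\<Sum>x\<in>U1. f x + f (\<Phi> x))" for f :: "_ \<Rightarrow> real"
    using sum.subset_diff[OF sub finU, of f] sum.reindex_bij_betw[OF bij, of f]
    by (simp add: sum.distrib)
  have Wnn: "0 \<le> W F" for F unfolding W_def using err_nonneg[of p n F] p0 p1 by simp
  have Hnn: "0 \<le> H \<sigma> F" for \<sigma> F unfolding H_def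
    by (intro sum_nonneg mult_nonneg_nonneg) (auto simp: GG_nonneg)
  have point: "p * (wx x + wx (\<Phi> x)) \<le> hx x + hx (\<Phi> x)" if x: "x \<in> U1" for x
  proof -
    obtain \<sigma> F where xs: "x = (\<sigma>, F)" by (cases x)
    have sp: "\<sigma> permutes {..<n}" and F: "F \<subseteq> pairs n" and e: "(v, Suc v) \<in> F"
      using x unfolding xs U1_def PS_def by auto
    define M where "M = A n (obs n \<sigma> F)"
    have H2: "H (tau v \<circ> \<sigma>) (TT v F) = (\<Sum>\<pi>\<in>PS n. pmf M \<pi> * GG n v (tau v \<circ> \<sigma>) \<pi>)"
      unfolding H_def M_def obs_swap[OF sp F e] ..
    have "1 = (\<Sum>\<pi>\<in>PS n. pmf M \<pi> * 1)" using sum_pmf_PS[OF vA] unfolding M_def by simp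
    also have "\<dots> \<le> (\<Sum>\<pi>\<in>PS n. pmf M \<pi> * (GG n v \<sigma> \<pi> + GG n v (tau v \<circ> \<sigma>) \<pi>))"
      by (intro sum_mono mult_left_mono GG_pair[OF sp v]) auto
    also have "\<dots> = H \<sigma> F + H (tau v \<circ> \<sigma>) (TT v F)"
      unfolding H2 unfolding H_def M_def by (simp add: distrib_left sum.distrib)
    finally have Hs: "1 \<le> H \<sigma> F + H (tau v \<circ> \<sigma>) (TT v F)" .
    have pW: "p * W (TT v F) = (1 - p) * W F"
      unfolding W_def using err_swap[OF F e, of p] by (simp add: algebra_simps)
    have WW: "W F \<le> W (TT v F)"
    proof -
      have "p * W F \<le> (1 - p) * W F" using p1 Wnn[of F] by (intro mult_right_mono) auto
      then have "p * W F \<le> p * W (TT v F)" using pW by simp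
      then show ?thesis using p0 by simp
    qed
    have "p * (wx x + wx (\<Phi> x)) = W F" unfolding wx_def xs \<Phi>_def using pW by (simp add: algebra_simps)
    also have "\<dots> \<le> W F * (H \<sigma> F + H (tau v \<circ> \<sigma>) (TT v F))"
      using Hs Wnn[of F] by (metis mult.right_neutral mult_left_mono)
    also have "\<dots> \<le> W F * H \<sigma> F + W (TT v F) * H (tau v \<circ> \<sigma>) (TT v F)"
      using WW Hnn[of "tau v \<circ> \<sigma>" "TT v F"] by (simp add: distrib_left mult_right_mono)
    also have "\<dots> = hx x + hx (\<Phi> x)" unfolding hx_def xs \<Phi>_def by simp
    finally show ?thesis .
  qed
  have tot: "sum wx U = 1"
  proof -
    have "sum wx U = (\<Sum>\<sigma>\<in>PS n. \<Sum>F\<in>Pow (pairs n). W F)"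
      unfolding U_def wx_def sum.cartesian_product by (simp add: split_def)
    also have "\<dots> = real (card (PS n)) * (\<Sum>F\<in>Pow (pairs n). W F)" by simp
    also have "card (PS n) = fact n" unfolding PS_def by (rule card_permutations) auto
    also have "(\<Sum>F\<in>Pow (pairs n). W F) = 1 / fact n * (\<Sum>F\<in>Pow (pairs n). err_prob p n F)"
      unfolding W_def by (simp add: sum_distrib_left)
    also have "(\<Sum>F\<in>Pow (pairs n). err_prob p n F) = 1"
      unfolding err_prob_def by (rule err_sum[OF finite_pairs])
    finally show ?thesis by simp
  qed
  have "p = p * sum wx U" using tot by simp
  also have "\<dots> = (\<Sum>x\<in>U1. p * (wx x + wx (\<Phi> x)))" unfolding split by (simp add: sum_distrib_left)
  also have "\<dots> \<le> (\<Sum>x\<in>U1. hx x + hx (\<Phi> x))" by (intro sum_mono point)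
  also have "\<dots> = sum hx U" unfolding split ..
  also have "\<dots> = Ex p A n (GG n v)"
    unfolding U_def hx_def Ex_def W_def H_def sum.cartesian_product by (simp add: split_def)
  finally show ?thesis .
qed

lemma GG_sum_le: "(\<Sum>v<n - 1. GG n v \<sigma> \<pi>) \<le> 2 * (\<Sum>u<n. gg n \<sigma> \<pi> u)"
proof -
  have a: "(\<Sum>v<n - 1. gg n \<sigma> \<pi> v) \<le> (\<Sum>u<n. gg n \<sigma> \<pi> u)"
    by (rule sum_mono2) (auto simp: gg_nonneg)
  have b: "(\<Sum>v<n - 1. gg n \<sigma> \<pi> (Suc v)) \<le> (\<Sum>u<n. gg n \<sigma> \<pi> u)"
  proof (cases n)
    case 0 then show ?thesis by simp
  next
    case (Suc m)
    have "(\<Sum>u<n. gg n \<sigma> \<pi> u) = gg n \<sigma> \<pi> 0 + (\<Sum>v<m. gg n \<sigma> \<pi> (Suc v))"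
      unfolding Suc by (rule sum.lessThan_Suc_shift)
    then show ?thesis using gg_nonneg[of n \<sigma> \<pi> 0] Suc by simp
  qed
  show ?thesis using a b unfolding GG_def sum.distrib by linarith
qed

lemma lower_bound:
  assumes vA: "valid_alg A" and p0: "0 < p" and p1: "p \<le> 1/2"
  shows "p * real (n - 1) \<le> 2 * exp_disl p A n"
proof -
  have "p * real (n - 1) = (\<Sum>v<n - 1. p)" by simp
  also have "\<dots> \<le> (\<Sum>v<n - 1. Ex p A n (GG n v))"
    by (intro sum_mono key[OF vA p0 p1]) auto
  also have "\<dots> = Ex p A n (\<lambda>\<sigma> \<pi>. \<Sum>v<n - 1. GG n v \<sigma> \<pi>)"
    by (rule Ex_sum[symmetric]) simp
  also have "\<dots> \<le> Ex p A n (\<lambda>\<sigma> \<pi>. 2 * (\<Sum>u<n. gg n \<sigma> \<pi> u))"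
    by (rule Ex_mono) (use p0 p1 GG_sum_le in auto)
  also have "\<dots> = 2 * exp_disl p A n" unfolding Ex_cmult exp_disl_Ex[OF vA] ..
  finally show ?thesis .
qed

theorem theorem6p3:
  fixes p :: real and A :: "nat \<Rightarrow> (nat \<Rightarrow> nat \<Rightarrow> bool) \<Rightarrow> (nat \<Rightarrow> nat) pmf"
  assumes "0 < p" and "p < 1/2"
    and "valid_alg A"
  shows "(\<lambda>n. exp_disl p A n) \<notin> o[at_top](\<lambda>n. real n)"
proof
  assume o: "(\<lambda>n. exp_disl p A n) \<in> o[at_top](\<lambda>n. real n)"
  have "p / 4 > 0" using assms by simp
  from landau_o.smallD[OF o this] obtain N where
    N: "\<And>n. n \<ge> N \<Longrightarrow> norm (exp_disl p A n) \<le> p / 4 * norm (real n)"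
    unfolding eventually_at_top_linorder by blast
  define n where "n = max N 3"
  have n3: "n \<ge> 3" and nN: "n \<ge> N" unfolding n_def by auto
  have "exp_disl p A n \<le> p / 4 * real n" using N[OF nN] by simp
  moreover have "p * real (n - 1) \<le> 2 * exp_disl p A n"
    using lower_bound[OF assms(3,1)] assms(2) by simp
  moreover have "real (n - 1) = real n - 1" using n3 by simp
  ultimately have "p * (real n - 1) \<le> p / 2 * real n" by simp
  then have "p * (real n - 2) \<le> 0" by (simp add: algebra_simps)
  moreover have "real n - 2 > 0" using n3 by simp
  ultimately show False using assms(1) by (simp add: mult_le_0_iff)
qed

end
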